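(* Let $(\mathfrak g,[\cdot,\cdot]_{\mathfrak g},E)$ be an ENL algebra and $r\in\mathfrak g\otimes\mathfrak g$. Assume that the cobracket $\Delta_r(x)=(\mathrm{ad}_x\otimes\mathrm{Id}+\mathrm{Id}\otimes\mathrm{ad}_x)(r)$ endows $(\mathfrak g,\mathfrak g^* )$ with a coboundary Lie bialgebra structure, where the bracket on $\mathfrak g^*$ is $\langle[\alpha,\beta]_{\mathfrak g^*},x\rangle=\langle\alpha\otimes\beta,\Delta_r(x)\rangle$. Then $(\mathfrak g^*,[\cdot,\cdot]_{\mathfrak g^*},E^* )$ is an ENL algebra if and only if for all $x\in\mathfrak g$, $(\mathrm{ad}_{Ex}\otimes\mathrm{Id}+\mathrm{Id}\otimes\mathrm{ad}_{Ex})(r)=(E\otimes\mathrm{Id})(\mathrm{ad}_x\otimes\mathrm{Id}+\mathrm{Id}\otimes\mathrm{ad}_x)(r)$.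
   Context: Vector spaces are finite-dimensional over an algebraically closed field of characteristic zero. An ENL algebra $(\mathfrak g,[\cdot,\cdot],E)$ is a Lie algebra with linear $E$ satisfying $E[x,y]=[x,Ey]$ for all $x,y$ (equivalently $E[x,y]=[Ex,y]$). $E^*$ denotes the dual map of $E$. *)

theory Defs
  imports "HOL-Computational_Algebra.Polynomial"
begin

text \<open>Finite-dimensional vector spaces are modelled in coordinates: a space of
dimension CARD('n) over the field 'k is the function space 'n \<Rightarrow> 'k
(standard basis basis_vec i). The dual space is again 'n \<Rightarrow> 'k with the
pairing dpair. Elements of g \<otimes> g are coefficient arrays 'n \<Rightarrow> 'n \<Rightarrow> 'k
with respect to the basis e_i \<otimes> e_j.\<close>

definition alg_closed_field :: "'k::field itself \<Rightarrow> bool" where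
  "alg_closed_field _ \<longleftrightarrow> (\<forall>p::'k poly. degree p \<noteq> 0 \<longrightarrow> (\<exists>z. poly p z = 0))"

definition lin_map :: "(('n \<Rightarrow> 'k::field) \<Rightarrow> ('m \<Rightarrow> 'k)) \<Rightarrow> bool" where
  "lin_map f \<longleftrightarrow> (\<forall>x y c. f (\<lambda>i. c * x i + y i) = (\<lambda>i. c * f x i + f y i))"

definition bilinear_map :: "(('n \<Rightarrow> 'k::field) \<Rightarrow> ('n \<Rightarrow> 'k) \<Rightarrow> ('n \<Rightarrow> 'k)) \<Rightarrow> bool" where
  "bilinear_map b \<longleftrightarrow> (\<forall>z. lin_map (\<lambda>x. b x z) \<and> lin_map (\<lambda>x. b z x))"

definition lie_bracket :: "(('n \<Rightarrow> 'k::field) \<Rightarrow> ('n \<Rightarrow> 'k) \<Rightarrow> ('n \<Rightarrow> 'k)) \<Rightarrow> bool" where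
  "lie_bracket b \<longleftrightarrow> bilinear_map b \<and> (\<forall>x. b x x = (\<lambda>_. 0)) \<and>
     (\<forall>x y z. (\<lambda>i. b x (b y z) i + b y (b z x) i + b z (b x y) i) = (\<lambda>_. 0))"

definition ENL :: "(('n \<Rightarrow> 'k::field) \<Rightarrow> ('n \<Rightarrow> 'k) \<Rightarrow> ('n \<Rightarrow> 'k)) \<Rightarrow> (('n \<Rightarrow> 'k) \<Rightarrow> ('n \<Rightarrow> 'k)) \<Rightarrow> bool" where
  "ENL b E \<longleftrightarrow> lie_bracket b \<and> lin_map E \<and> (\<forall>x y. E (b x y) = b x (E y))"

definition basis_vec :: "'n \<Rightarrow> 'n \<Rightarrow> 'k::field" where
  "basis_vec i = (\<lambda>j. if j = i then 1 else 0)"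

definition tensor_map :: "(('n::finite \<Rightarrow> 'k::field) \<Rightarrow> ('n \<Rightarrow> 'k)) \<Rightarrow> (('n \<Rightarrow> 'k) \<Rightarrow> ('n \<Rightarrow> 'k))
    \<Rightarrow> ('n \<Rightarrow> 'n \<Rightarrow> 'k) \<Rightarrow> ('n \<Rightarrow> 'n \<Rightarrow> 'k)" where
  "tensor_map A B t = (\<lambda>k l. \<Sum>i\<in>UNIV. \<Sum>j\<in>UNIV. t i j * A (basis_vec i) k * B (basis_vec j) l)"

definition tensor_ad :: "(('n::finite \<Rightarrow> 'k::field) \<Rightarrow> ('n \<Rightarrow> 'k) \<Rightarrow> ('n \<Rightarrow> 'k)) \<Rightarrow> ('n \<Rightarrow> 'k)
    \<Rightarrow> ('n \<Rightarrow> 'n \<Rightarrow> 'k) \<Rightarrow> ('n \<Rightarrow> 'n \<Rightarrow> 'k)" where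
  "tensor_ad b x t = (\<lambda>k l. tensor_map (b x) id t k l + tensor_map id (b x) t k l)"

definition cobracket :: "(('n::finite \<Rightarrow> 'k::field) \<Rightarrow> ('n \<Rightarrow> 'k) \<Rightarrow> ('n \<Rightarrow> 'k)) \<Rightarrow> ('n \<Rightarrow> 'n \<Rightarrow> 'k)
    \<Rightarrow> ('n \<Rightarrow> 'k) \<Rightarrow> ('n \<Rightarrow> 'n \<Rightarrow> 'k)" where
  "cobracket b r x = tensor_ad b x r"

definition dpair :: "('n::finite \<Rightarrow> 'k::field) \<Rightarrow> ('n \<Rightarrow> 'k) \<Rightarrow> 'k" where
  "dpair \<alpha> x = (\<Sum>i\<in>UNIV. \<alpha> i * x i)"

definition dpair2 :: "('n::finite \<Rightarrow> 'k::field) \<Rightarrow> ('n \<Rightarrow> 'k) \<Rightarrow> ('n \<Rightarrow> 'n \<Rightarrow> 'k) \<Rightarrow> 'k" where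
  "dpair2 \<alpha> \<beta> t = (\<Sum>k\<in>UNIV. \<Sum>l\<in>UNIV. \<alpha> k * \<beta> l * t k l)"

definition dual_bracket :: "(('n::finite \<Rightarrow> 'k::field) \<Rightarrow> ('n \<Rightarrow> 'n \<Rightarrow> 'k))
    \<Rightarrow> ('n \<Rightarrow> 'k) \<Rightarrow> ('n \<Rightarrow> 'k) \<Rightarrow> ('n \<Rightarrow> 'k)" where
  "dual_bracket \<delta> \<alpha> \<beta> = (\<lambda>i. dpair2 \<alpha> \<beta> (\<delta> (basis_vec i)))"

definition dual_map :: "(('n::finite \<Rightarrow> 'k::field) \<Rightarrow> ('n \<Rightarrow> 'k)) \<Rightarrow> ('n \<Rightarrow> 'k) \<Rightarrow> ('n \<Rightarrow> 'k)" where
  "dual_map E \<alpha> = (\<lambda>i. dpair \<alpha> (E (basis_vec i)))"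

definition lie_bialgebra :: "(('n::finite \<Rightarrow> 'k::field) \<Rightarrow> ('n \<Rightarrow> 'k) \<Rightarrow> ('n \<Rightarrow> 'k))
    \<Rightarrow> (('n \<Rightarrow> 'k) \<Rightarrow> ('n \<Rightarrow> 'n \<Rightarrow> 'k)) \<Rightarrow> bool" where
  "lie_bialgebra b \<delta> \<longleftrightarrow> lie_bracket b
     \<and> (\<forall>x y c. \<delta> (\<lambda>i. c * x i + y i) = (\<lambda>k l. c * \<delta> x k l + \<delta> y k l))
     \<and> lie_bracket (dual_bracket \<delta>)
     \<and> (\<forall>x y. \<delta> (b x y) = (\<lambda>k l. tensor_ad b x (\<delta> y) k l - tensor_ad b y (\<delta> x) k l))"

end

theory Submission imports Defs begin

lemma basis_sum: fixes f :: "'n::finite \<Rightarrow> 'k::field" shows "(\<Sum>k\<in>UNIV. basis_vec a k * f k) = (f a :: 'k::field)"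
proof -
  have "(\<Sum>k\<in>UNIV. basis_vec a k * f k) = (\<Sum>k\<in>UNIV. if k = a then f k else 0)"
    by (rule sum.cong) (auto simp: basis_vec_def)
  thus ?thesis by simp
qed

lemma basis_sum2: fixes f :: "'n::finite \<Rightarrow> 'k::field" shows "(\<Sum>k\<in>UNIV. f k * basis_vec a k) = (f a :: 'k::field)"
proof -
  have "(\<Sum>k\<in>UNIV. f k * basis_vec a k) = (\<Sum>k\<in>UNIV. if k = a then f k else 0)"
    by (rule sum.cong) (auto simp: basis_vec_def)
  thus ?thesis by simp
qed

lemma lin_expand2:
  fixes D :: "('n::finite \<Rightarrow> 'k::field) \<Rightarrow> ('m \<Rightarrow> 'm \<Rightarrow> 'k)"
  assumes L: "\<forall>x y c. D (\<lambda>i. c * x i + y i) = (\<lambda>k l. c * D x k l + D y k l)"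
  shows "D x k l = (\<Sum>j\<in>UNIV. x j * D (basis_vec j) k l)"
proof -
  have z: "D (\<lambda>_. 0) = (\<lambda>_ _. 0)"
  proof -
    have "D (\<lambda>i. 1 * (\<lambda>_. 0) i + (\<lambda>_. 0) i) = (\<lambda>k l. 1 * D (\<lambda>_. 0) k l + D (\<lambda>_. 0) k l)"
      using L[rule_format, of 1 "\<lambda>_. 0" "\<lambda>_. 0"] by simp
    hence "D (\<lambda>_. 0) = (\<lambda>k l. D (\<lambda>_. 0) k l + D (\<lambda>_. 0) k l)" by simp
    hence "\<And>k l. D (\<lambda>_. 0) k l = D (\<lambda>_. 0) k l + D (\<lambda>_. 0) k l" by metis
    thus ?thesis by (intro ext) (metis add_cancel_right_right)
  qed
  have "\<And>S. finite S \<Longrightarrow> D (\<lambda>i. if i \<in> S then x i else 0) k l = (\<Sum>j\<in>S. x j * D (basis_vec j) k l)"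
  proof -
    fix S :: "'n set" assume "finite S"
    thus "D (\<lambda>i. if i \<in> S then x i else 0) k l = (\<Sum>j\<in>S. x j * D (basis_vec j) k l)"
    proof (induction S rule: finite_induct)
      case empty thus ?case using z by simp
    next
      case (insert a S)
      have "(\<lambda>i. if i \<in> insert a S then x i else 0) = (\<lambda>i. x a * basis_vec a i + (if i \<in> S then x i else 0))"
        using insert(2) by (auto simp: basis_vec_def)
      hence "D (\<lambda>i. if i \<in> insert a S then x i else 0) k l = x a * D (basis_vec a) k l + D (\<lambda>i. if i \<in> S then x i else 0) k l"
        using L by simp
      thus ?case using insert by simp
    qed
  qed
  from this[of UNIV] show ?thesis by simp
qed

lemma lin_expand1:
  fixes E :: "('n::finite \<Rightarrow> 'k::field) \<Rightarrow> ('m \<Rightarrow> 'k)"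
  assumes "lin_map E"
  shows "E x m = (\<Sum>j\<in>UNIV. x j * E (basis_vec j) m)"
proof -
  have "(\<lambda>x k (l::unit). E x k) x m () = (\<Sum>j\<in>UNIV. x j * (\<lambda>x k (l::unit). E x k) (basis_vec j) m ())"
    by (rule lin_expand2) (use assms in \<open>simp add: lin_map_def\<close>)
  thus ?thesis by simp
qed

lemma lie_antisym:
  assumes "lie_bracket B"
  shows "B x y i = - B y x i"
proof -
  have bl: "\<And>z. lin_map (\<lambda>x. B x z)" "\<And>z. lin_map (\<lambda>x. B z x)" and al: "\<And>x. B x x = (\<lambda>_. 0)"
    using assms unfolding lie_bracket_def bilinear_map_def by auto
  have add1: "\<And>x y z. B (\<lambda>i. x i + y i) z = (\<lambda>i. B x z i + B y z i)"
  proof -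
    fix x y z
    have "B (\<lambda>i. 1 * x i + y i) z = (\<lambda>i. 1 * B x z i + B y z i)"
      using bl(1)[of z] unfolding lin_map_def by blast
    thus "B (\<lambda>i. x i + y i) z = (\<lambda>i. B x z i + B y z i)" by simp
  qed
  have add2: "\<And>x y z. B z (\<lambda>i. x i + y i) = (\<lambda>i. B z x i + B z y i)"
  proof -
    fix x y z
    have "B z (\<lambda>i. 1 * x i + y i) = (\<lambda>i. 1 * B z x i + B z y i)"
      using bl(2)[of z] unfolding lin_map_def by blast
    thus "B z (\<lambda>i. x i + y i) = (\<lambda>i. B z x i + B z y i)" by simp
  qed
  have "0 = B (\<lambda>i. x i + y i) (\<lambda>i. x i + y i) i" using al by simp
  also have "\<dots> = B x x i + B x y i + (B y x i + B y y i)" by (simp add: add1 add2)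
  also have "\<dots> = B x y i + B y x i" using al by simp
  finally show ?thesis by (simp add: eq_neg_iff_add_eq_0)
qed

lemma basis_sum3: fixes f :: "'n::finite \<Rightarrow> 'k::field" shows "(\<Sum>k\<in>UNIV. f k * basis_vec k a) = f a"
proof -
  have "(\<Sum>k\<in>UNIV. f k * basis_vec k a) = (\<Sum>k\<in>UNIV. if k = a then f k else 0)"
    by (rule sum.cong) (auto simp: basis_vec_def)
  thus ?thesis by simp
qed

lemma swap3: "(\<Sum>j\<in>A. \<Sum>k\<in>B. \<Sum>l\<in>C. f j k l) = (\<Sum>k\<in>B. \<Sum>l\<in>C. \<Sum>j\<in>A. (f j k l :: 'a::comm_monoid_add))"
proof -
  have "(\<Sum>j\<in>A. \<Sum>k\<in>B. \<Sum>l\<in>C. f j k l) = (\<Sum>k\<in>B. \<Sum>j\<in>A. \<Sum>l\<in>C. f j k l)"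
    by (rule sum.swap)
  also have "\<dots> = (\<Sum>k\<in>B. \<Sum>l\<in>C. \<Sum>j\<in>A. f j k l)"
    by (rule sum.cong[OF refl], rule sum.swap)
  finally show ?thesis .
qed

lemma swap3r: "(\<Sum>m\<in>A. \<Sum>l\<in>B. \<Sum>k\<in>C. f m l k) = (\<Sum>k\<in>C. \<Sum>l\<in>B. \<Sum>m\<in>A. (f m l k :: 'a::comm_monoid_add))"
proof -
  have "(\<Sum>m\<in>A. \<Sum>l\<in>B. \<Sum>k\<in>C. f m l k) = (\<Sum>m\<in>A. \<Sum>k\<in>C. \<Sum>l\<in>B. f m l k)"
    by (rule sum.cong[OF refl], rule sum.swap)
  also have "\<dots> = (\<Sum>k\<in>C. \<Sum>m\<in>A. \<Sum>l\<in>B. f m l k)" by (rule sum.swap)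
  also have "\<dots> = (\<Sum>k\<in>C. \<Sum>l\<in>B. \<Sum>m\<in>A. f m l k)"
    by (rule sum.cong[OF refl], rule sum.swap)
  finally show ?thesis .
qed

lemma L1:
  fixes D :: "('n::finite \<Rightarrow> 'k::field) \<Rightarrow> ('n \<Rightarrow> 'n \<Rightarrow> 'k)"
  assumes L: "\<forall>x y c. D (\<lambda>i. c * x i + y i) = (\<lambda>k l. c * D x k l + D y k l)"
  shows "dual_map E (dual_bracket D \<alpha> \<beta>) i = (\<Sum>k\<in>UNIV. \<Sum>l\<in>UNIV. \<alpha> k * \<beta> l * D (E (basis_vec i)) k l)"
proof -
  have "dual_map E (dual_bracket D \<alpha> \<beta>) i = (\<Sum>j\<in>UNIV. (\<Sum>k\<in>UNIV. \<Sum>l\<in>UNIV. \<alpha> k * \<beta> l * D (basis_vec j) k l) * E (basis_vec i) j)"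
    by (simp add: dual_map_def dual_bracket_def dpair_def dpair2_def)
  also have "\<dots> = (\<Sum>k\<in>UNIV. \<Sum>l\<in>UNIV. \<Sum>j\<in>UNIV. \<alpha> k * \<beta> l * (E (basis_vec i) j * D (basis_vec j) k l))"
    apply (simp only: sum_distrib_right)
    apply (rule trans[OF swap3])
    apply (intro sum.cong refl)
    apply (simp add: mult.commute mult.left_commute)
    done
  also have "\<dots> = (\<Sum>k\<in>UNIV. \<Sum>l\<in>UNIV. \<alpha> k * \<beta> l * D (E (basis_vec i)) k l)"
  proof (intro sum.cong refl)
    fix k l
    show "(\<Sum>j\<in>UNIV. \<alpha> k * \<beta> l * (E (basis_vec i) j * D (basis_vec j) k l)) = \<alpha> k * \<beta> l * D (E (basis_vec i)) k l"
      unfolding lin_expand2[OF L, of "E (basis_vec i)" k l] by (simp add: sum_distrib_left)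
  qed
  finally show ?thesis .
qed

lemma L2:
  fixes D :: "('n::finite \<Rightarrow> 'k::field) \<Rightarrow> ('n \<Rightarrow> 'n \<Rightarrow> 'k)"
  shows "dual_bracket D (dual_map E \<alpha>) \<beta> i = (\<Sum>k\<in>UNIV. \<Sum>l\<in>UNIV. \<alpha> k * \<beta> l * tensor_map E id (D (basis_vec i)) k l)"
proof -
  have tm: "\<And>t k l. tensor_map E id t k l = (\<Sum>m\<in>UNIV. t m l * E (basis_vec m) k)"
    unfolding tensor_map_def
    by (rule sum.cong[OF refl]) (simp add: basis_sum3)
  have "dual_bracket D (dual_map E \<alpha>) \<beta> i = (\<Sum>m\<in>UNIV. \<Sum>l\<in>UNIV. (\<Sum>k\<in>UNIV. \<alpha> k * E (basis_vec m) k) * \<beta> l * D (basis_vec i) m l)"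
    by (simp add: dual_map_def dual_bracket_def dpair_def dpair2_def)
  also have "\<dots> = (\<Sum>k\<in>UNIV. \<Sum>l\<in>UNIV. \<Sum>m\<in>UNIV. \<alpha> k * \<beta> l * (D (basis_vec i) m l * E (basis_vec m) k))"
    apply (simp only: sum_distrib_right)
    apply (rule trans[OF swap3r])
    apply (intro sum.cong refl)
    apply (simp add: mult.commute mult.left_commute)
    done
  also have "\<dots> = (\<Sum>k\<in>UNIV. \<Sum>l\<in>UNIV. \<alpha> k * \<beta> l * tensor_map E id (D (basis_vec i)) k l)"
    by (intro sum.cong refl, unfold tm, rule sum_distrib_left[symmetric])
  finally show ?thesis .
qed

lemma bb: fixes X :: "'n::finite \<Rightarrow> 'n \<Rightarrow> 'k::field"
  shows "(\<Sum>k'\<in>UNIV. \<Sum>l'\<in>UNIV. basis_vec k k' * basis_vec l l' * X k' l') = X k l"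
proof -
  have "(\<Sum>k'\<in>UNIV. \<Sum>l'\<in>UNIV. basis_vec k k' * basis_vec l l' * X k' l') = (\<Sum>k'\<in>UNIV. basis_vec k k' * (\<Sum>l'\<in>UNIV. basis_vec l l' * X k' l'))"
    by (simp add: sum_distrib_left mult.assoc)
  also have "\<dots> = (\<Sum>k'\<in>UNIV. basis_vec k k' * X k' l)" by (simp only: basis_sum)
  also have "\<dots> = X k l" by (rule basis_sum)
  finally show ?thesis .
qed

lemma dneg:
  assumes LB: "lie_bracket (dual_bracket D)"
  shows "dual_map E (dual_bracket D \<alpha> \<beta>) i = - dual_map E (dual_bracket D \<beta> \<alpha>) i"
  unfolding dual_map_def dpair_def
  by (simp add: lie_antisym[OF LB, of \<alpha> \<beta>] sum_negf)

theorem proposition5p4: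
  fixes b :: "('n::finite \<Rightarrow> 'k::field_char_0) \<Rightarrow> ('n \<Rightarrow> 'k) \<Rightarrow> ('n \<Rightarrow> 'k)"
    and E :: "('n \<Rightarrow> 'k) \<Rightarrow> ('n \<Rightarrow> 'k)"
    and r :: "'n \<Rightarrow> 'n \<Rightarrow> 'k"
  assumes "alg_closed_field TYPE('k)"
    and "ENL b E"
    and "lie_bialgebra b (cobracket b r)"
  shows "ENL (dual_bracket (cobracket b r)) (dual_map E) \<longleftrightarrow>
         (\<forall>x. tensor_ad b (E x) r = tensor_map E id (tensor_ad b x r))"
proof -
  define D where "D = cobracket b r"
  have TD: "\<And>x. tensor_ad b x r = D x" by (simp add: D_def cobracket_def)
  have DL: "\<forall>x y c. D (\<lambda>i. c * x i + y i) = (\<lambda>k l. c * D x k l + D y k l)"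
    and LB: "lie_bracket (dual_bracket D)"
    using assms(3) unfolding lie_bialgebra_def D_def by auto
  have EL: "lin_map E" using assms(2) unfolding ENL_def by auto
  have DEL: "\<forall>x y c. (\<lambda>x. D (E x)) (\<lambda>i. c * x i + y i) = (\<lambda>k l. c * (\<lambda>x. D (E x)) x k l + (\<lambda>x. D (E x)) y k l)"
    using EL DL unfolding lin_map_def by simp
  have tm: "\<And>t k l. tensor_map E id t k l = (\<Sum>m\<in>UNIV. t m l * E (basis_vec m) k)"
    unfolding tensor_map_def
    by (rule sum.cong[OF refl]) (simp add: basis_sum3)
  define P' where "P' \<longleftrightarrow> (\<forall>i k l. D (E (basis_vec i)) k l = tensor_map E id (D (basis_vec i)) k l)"
  have PP: "(\<forall>x. tensor_ad b (E x) r = tensor_map E id (tensor_ad b x r)) \<longleftrightarrow> P'"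
  proof
    assume "\<forall>x. tensor_ad b (E x) r = tensor_map E id (tensor_ad b x r)"
    thus P' unfolding P'_def TD by simp
  next
    assume P: P'
    show "\<forall>x. tensor_ad b (E x) r = tensor_map E id (tensor_ad b x r)"
    proof (intro allI ext, unfold TD)
      fix x k l
      have "D (E x) k l = (\<Sum>j\<in>UNIV. x j * D (E (basis_vec j)) k l)"
        using lin_expand2[OF DEL, of x k l] by simp
      also have "\<dots> = (\<Sum>j\<in>UNIV. x j * (\<Sum>m\<in>UNIV. D (basis_vec j) m l * E (basis_vec m) k))"
        using P unfolding P'_def tm by simp
      also have "\<dots> = (\<Sum>m\<in>UNIV. (\<Sum>j\<in>UNIV. x j * D (basis_vec j) m l) * E (basis_vec m) k)"
      proof -
        have "(\<Sum>j\<in>UNIV. x j * (\<Sum>m\<in>UNIV. D (basis_vec j) m l * E (basis_vec m) k)) = (\<Sum>j\<in>UNIV. \<Sum>m\<in>UNIV. x j * D (basis_vec j) m l * E (basis_vec m) k)"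
          by (simp only: sum_distrib_left mult.assoc)
        also have "\<dots> = (\<Sum>m\<in>UNIV. \<Sum>j\<in>UNIV. x j * D (basis_vec j) m l * E (basis_vec m) k)"
          by (rule sum.swap)
        also have "\<dots> = (\<Sum>m\<in>UNIV. (\<Sum>j\<in>UNIV. x j * D (basis_vec j) m l) * E (basis_vec m) k)"
          by (simp only: sum_distrib_right)
        finally show ?thesis .
      qed
      also have "\<dots> = (\<Sum>m\<in>UNIV. D x m l * E (basis_vec m) k)"
      proof (rule sum.cong[OF refl])
        fix m
        have e: "D x m l = (\<Sum>j\<in>UNIV. x j * D (basis_vec j) m l)" by (rule lin_expand2[OF DL])
        show "(\<Sum>j\<in>UNIV. x j * D (basis_vec j) m l) * E (basis_vec m) k = D x m l * E (basis_vec m) k"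
          by (simp only: e)
      qed
      also have "\<dots> = tensor_map E id (D x) k l" by (simp only: tm)
      finally show "D (E x) k l = tensor_map E id (D x) k l" .
    qed
  qed
  have C_iff: "(\<forall>\<alpha> \<beta> i. dual_map E (dual_bracket D \<alpha> \<beta>) i = dual_bracket D (dual_map E \<alpha>) \<beta> i) \<longleftrightarrow> P'"
  proof
    assume C: "\<forall>\<alpha> \<beta> i. dual_map E (dual_bracket D \<alpha> \<beta>) i = dual_bracket D (dual_map E \<alpha>) \<beta> i"
    show P' unfolding P'_def
    proof (intro allI)
      fix i k l
      have "D (E (basis_vec i)) k l = (\<Sum>k'\<in>UNIV. \<Sum>l'\<in>UNIV. basis_vec k k' * basis_vec l l' * D (E (basis_vec i)) k' l')"
        by (rule bb[symmetric])
      also have "\<dots> = dual_map E (dual_bracket D (basis_vec k) (basis_vec l)) i"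
        by (rule L1[OF DL, symmetric])
      also have "\<dots> = dual_bracket D (dual_map E (basis_vec k)) (basis_vec l) i" using C by blast
      also have "\<dots> = (\<Sum>k'\<in>UNIV. \<Sum>l'\<in>UNIV. basis_vec k k' * basis_vec l l' * tensor_map E id (D (basis_vec i)) k' l')"
        by (rule L2)
      also have "\<dots> = tensor_map E id (D (basis_vec i)) k l" by (rule bb)
      finally show "D (E (basis_vec i)) k l = tensor_map E id (D (basis_vec i)) k l" .
    qed
  next
    assume P: P'
    show "\<forall>\<alpha> \<beta> i. dual_map E (dual_bracket D \<alpha> \<beta>) i = dual_bracket D (dual_map E \<alpha>) \<beta> i"
      using P unfolding P'_def L1[OF DL] L2 by simp
  qed
  have ELD: "lin_map (dual_map E)"
    unfolding lin_map_def dual_map_def dpair_def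
    by (intro allI ext) (simp only: sum.distrib sum_distrib_left distrib_right mult.assoc)
  have "ENL (dual_bracket D) (dual_map E) \<longleftrightarrow>
     (\<forall>\<alpha> \<beta> i. dual_map E (dual_bracket D \<alpha> \<beta>) i = dual_bracket D (dual_map E \<alpha>) \<beta> i)"
  proof
    assume "ENL (dual_bracket D) (dual_map E)"
    hence R: "\<And>\<alpha> \<beta>. dual_map E (dual_bracket D \<alpha> \<beta>) = dual_bracket D \<alpha> (dual_map E \<beta>)"
      unfolding ENL_def by blast
    show "\<forall>\<alpha> \<beta> i. dual_map E (dual_bracket D \<alpha> \<beta>) i = dual_bracket D (dual_map E \<alpha>) \<beta> i"
    proof (intro allI)
      fix \<alpha> \<beta> i
      have "dual_map E (dual_bracket D \<alpha> \<beta>) i = - dual_map E (dual_bracket D \<beta> \<alpha>) i"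
        by (rule dneg[OF LB])
      also have "\<dots> = - dual_bracket D \<beta> (dual_map E \<alpha>) i" by (simp only: R)
      also have "\<dots> = dual_bracket D (dual_map E \<alpha>) \<beta> i"
        by (simp add: lie_antisym[OF LB, of \<beta> "dual_map E \<alpha>"])
      finally show "dual_map E (dual_bracket D \<alpha> \<beta>) i = dual_bracket D (dual_map E \<alpha>) \<beta> i" .
    qed
  next
    assume C: "\<forall>\<alpha> \<beta> i. dual_map E (dual_bracket D \<alpha> \<beta>) i = dual_bracket D (dual_map E \<alpha>) \<beta> i"
    have "\<forall>\<alpha> \<beta>. dual_map E (dual_bracket D \<alpha> \<beta>) = dual_bracket D \<alpha> (dual_map E \<beta>)"
    proof (intro allI ext)
      fix \<alpha> \<beta> i
      have "dual_map E (dual_bracket D \<alpha> \<beta>) i = - dual_map E (dual_bracket D \<beta> \<alpha>) i"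
        by (rule dneg[OF LB])
      also have "\<dots> = - dual_bracket D (dual_map E \<beta>) \<alpha> i" by (simp only: C)
      also have "\<dots> = dual_bracket D \<alpha> (dual_map E \<beta>) i"
        by (simp add: lie_antisym[OF LB, of "dual_map E \<beta>" \<alpha>])
      finally show "dual_map E (dual_bracket D \<alpha> \<beta>) i = dual_bracket D \<alpha> (dual_map E \<beta>) i" .
    qed
    thus "ENL (dual_bracket D) (dual_map E)" unfolding ENL_def using LB ELD by blast
  qed
  thus ?thesis using C_iff PP unfolding D_def by simp
qed

end
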